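(* Let $\varphi$ be as described in the context, with $\varphi(z)=1+B_1z+B_2z^2+\cdots$. If $f(z)=z+\sum_{n\ge2}a_nz^n$ belongs to $\mathcal{K}_{\sigma}(\varphi)$, then \[ |a_2|\le \frac{B_1\sqrt{B_1}}{\sqrt{4B_1+|2B_1^2-4B_2|}} \] and \[ |a_3|\le\begin{cases}\left(1-\dfrac{2}{3B_1}\right)\dfrac{B_1^3}{4B_1+|2B_1^2-4B_2|}+\dfrac{B_1}{6}, & \text{if } B_1\ge \dfrac{2}{3},\\[3mm] \dfrac{B_1}{6}, & \text{if } B_1< \dfrac{2}{3}.\end{cases} \]
   Context: $\mathbb{U}=\{z\in\mathbb{C}:|z|<1\}$. For analytic $f,g$ on $\mathbb{U}$, $f\prec g$ means there is an analytic $w$ on $\mathbb{U}$ with $w(0)=0$, $|w(z)|<1$, and $f(z)=g(w(z))$. The function $\varphi$ is analytic and univalent in $\mathbb{U}$ with positive real part, $\varphi(0)=1$, $\varphi'(0)>0$, $\varphi$ maps $\mathbb{U}$ onto a region starlike with respect to $1$ and symmetric with respect to the real axis; $\varphi(z)=1+B_1z+B_2z^2+\cdots$ with real coefficients and $B_1>0$. $\sigma$ denotes the class of analytic functions $f(z)=z+\sum_{n\ge2}a_nz^n$ on $\mathbb{U}$ that are univalent in $\mathbb{U}$ and whose inverse $g=f^{-1}$ is also univalent in $\mathbb{U}$. $\mathcal{K}_{\sigma}(\varphi)$ is the set of $f\in\sigma$ with $1+\frac{zf''(z)}{f'(z)}\prec\varphi(z)$ ($z\in\mathbb{U}$) and $1+\frac{wg''(w)}{g'(w)}\prec\varphi(w)$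 ($w\in\mathbb{U}$), where $g=f^{-1}$. *)

theory Defs
  imports "HOL-Complex_Analysis.Complex_Analysis"
begin

definition unit_disc :: "complex set" where
  "unit_disc = ball 0 1"

definition taylor_coeff :: "(complex \<Rightarrow> complex) \<Rightarrow> nat \<Rightarrow> complex" where
  "taylor_coeff f n = (deriv ^^ n) f 0 / of_nat (fact n)"

definition subordinate :: "(complex \<Rightarrow> complex) \<Rightarrow> (complex \<Rightarrow> complex) \<Rightarrow> bool" where
  "subordinate p q \<longleftrightarrow> p holomorphic_on unit_disc \<and> q holomorphic_on unit_disc \<and>
     (\<exists>w. w holomorphic_on unit_disc \<and> w 0 = 0 \<and> (\<forall>z\<in>unit_disc. norm (w z) < 1) \<and>
          (\<forall>z\<in>unit_disc. p z = q (w z)))"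

definition admissible_phi :: "(complex \<Rightarrow> complex) \<Rightarrow> bool" where
  "admissible_phi \<phi> \<longleftrightarrow>
     \<phi> holomorphic_on unit_disc \<and> inj_on \<phi> unit_disc \<and>
     (\<forall>z\<in>unit_disc. Re (\<phi> z) > 0) \<and> \<phi> 0 = 1 \<and>
     deriv \<phi> 0 \<in> \<real> \<and> Re (deriv \<phi> 0) > 0 \<and>
     (\<forall>v\<in>\<phi> ` unit_disc. closed_segment 1 v \<subseteq> \<phi> ` unit_disc) \<and>
     (\<forall>v\<in>\<phi> ` unit_disc. cnj v \<in> \<phi> ` unit_disc) \<and>
     (\<forall>n. taylor_coeff \<phi> n \<in> \<real>)"

text \<open>g is the inverse of f continued univalently to the whole disc: g is analytic and
  univalent on the disc and g (f z) = z whenever z and f z lie in the disc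
  (hence g = f^{-1} near 0, so g is the analytic continuation of f^{-1}).\<close>
definition bi_univalent :: "(complex \<Rightarrow> complex) \<Rightarrow> (complex \<Rightarrow> complex) \<Rightarrow> bool" where
  "bi_univalent f g \<longleftrightarrow>
     f holomorphic_on unit_disc \<and> f 0 = 0 \<and> deriv f 0 = 1 \<and> inj_on f unit_disc \<and>
     g holomorphic_on unit_disc \<and> inj_on g unit_disc \<and>
     (\<forall>z\<in>unit_disc. f z \<in> unit_disc \<longrightarrow> g (f z) = z)"

definition K_sigma :: "(complex \<Rightarrow> complex) \<Rightarrow> (complex \<Rightarrow> complex) set" where
  "K_sigma \<phi> = {f. \<exists>g. bi_univalent f g \<and>
      subordinate (\<lambda>z. 1 + z * deriv (deriv f) z / deriv f z) \<phi> \<and>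
      subordinate (\<lambda>w. 1 + w * deriv (deriv g) w / deriv g w) \<phi>}"

end

theory Submission
  imports Defs
begin

lemma eq_deriv_open:
  assumes "open S" "z \<in> S" "\<And>x. x \<in> S \<Longrightarrow> k1 x = k2 x"
    "(k1 has_field_derivative D1) (at z)" "(k2 has_field_derivative D2) (at z)"
  shows "D1 = D2"
proof -
  have "(k2 has_field_derivative D1) (at z)"
    by (rule has_field_derivative_transform_within_open[OF assms(4,1,2)]) (use assms(3) in auto)
  then show ?thesis using assms(5) DERIV_unique by blast
qed

lemma schwarz_coeff:
  assumes holu: "u holomorphic_on ball 0 1" and u0: "u 0 = 0"
    and ub: "\<And>z. norm z < 1 \<Longrightarrow> norm (u z) < 1"
  shows "norm (deriv (deriv u) 0) / 2 \<le> 1 - norm (deriv u 0)^2"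
proof -
  obtain h where holh: "h holomorphic_on ball 0 1" and uz: "\<And>z. norm z < 1 \<Longrightarrow> u z = z * h z"
    and d0: "deriv u 0 = h 0"
    using Schwarz3[OF holu u0] by blast
  define D where "D = ball (0::complex) 1"
  have oD: "open D" and D0: "0 \<in> D" by (auto simp: D_def)
  have hd: "\<And>z. z \<in> D \<Longrightarrow> (h has_field_derivative deriv h z) (at z)"
    using holh holomorphic_derivI D_def by blast
  have hd1: "\<And>z. z \<in> D \<Longrightarrow> (deriv h has_field_derivative deriv (deriv h) z) (at z)"
    using holomorphic_deriv[OF holh] holomorphic_derivI D_def by blast
  have ud: "deriv u z = h z + z * deriv h z" if z: "z \<in> D" for z
  proof -
    have "((\<lambda>z. z * h z) has_field_derivative h z + z * deriv h z) (at z)"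
      using hd[OF z] by (auto intro!: derivative_eq_intros)
    then have "(u has_field_derivative h z + z * deriv h z) (at z)"
      by (rule has_field_derivative_transform_within_open[OF _ oD z]) (auto simp: D_def uz)
    then show ?thesis by (rule DERIV_imp_deriv)
  qed
  have "((\<lambda>z. h z + z * deriv h z) has_field_derivative 2 * deriv h 0) (at 0)"
    using hd[OF D0] hd1[OF D0] by (auto intro!: derivative_eq_intros)
  then have "(deriv u has_field_derivative 2 * deriv h 0) (at 0)"
    by (rule has_field_derivative_transform_within_open[OF _ oD D0]) (auto simp: ud)
  then have u2: "deriv (deriv u) 0 = 2 * deriv h 0" by (rule DERIV_imp_deriv)
  have hle: "norm (h z) \<le> 1" if "norm z < 1" for z
  proof (cases "z = 0")
    case True
    then show ?thesis using Schwarz_Lemma(2)[OF holu u0 ub, of 0] d0 by simp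
  next
    case False
    have "norm (u z) \<le> norm z" using Schwarz_Lemma(1)[OF holu u0 ub that] .
    then show ?thesis using uz[OF that] False by (simp add: norm_mult)
  qed
  show ?thesis
  proof (cases "\<exists>z. norm z < 1 \<and> norm (h z) = 1")
    case True
    then obtain z where z: "norm z < 1" "norm (h z) = 1" by blast
    have "ball z (1 - norm z) \<subseteq> ball 0 1"
      by (simp add: ball_subset_ball_iff)
    moreover have "\<And>w. norm (z - w) < 1 - norm z \<Longrightarrow> norm (h w) \<le> norm (h z)"
      using z hle by (metis calculation dist_0_norm dist_norm in_mono mem_ball)
    ultimately have "h constant_on ball 0 1"
      using Schwarz2[OF holh, of "1 - norm z" z] z by auto
    then obtain c where c: "\<And>w. w \<in> ball 0 1 \<Longrightarrow> h w = c" by (auto simp: constant_on_def)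
    have "deriv h 0 = 0"
      using eq_deriv_open[OF oD D0, of h "\<lambda>_. c", OF _ hd[OF D0]] c D_def by auto
    moreover have "norm (h 0) = 1" using c z by auto
    ultimately show ?thesis using u2 d0 by simp
  next
    case False
    then have hlt: "\<And>z. norm z < 1 \<Longrightarrow> norm (h z) < 1" using hle by force
    define c where "c = h 0"
    have c1: "norm c < 1" using hlt by (simp add: c_def)
    define M where "M = (\<lambda>z. Moebius_function 0 c (h z))"
    have M': "M = (\<lambda>z. (h z - c) / (1 - cnj c * h z))"
      by (simp add: M_def Moebius_function_simple)
    have holM: "M holomorphic_on ball 0 1"
      unfolding M_def
      by (rule holomorphic_on_compose_gen[OF holh Moebius_function_holomorphic[OF c1], unfolded o_def])
         (use hlt in auto)
    have M0: "M 0 = 0" by (simp add: M' c_def)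
    have Mb: "\<And>z. norm z < 1 \<Longrightarrow> norm (M z) < 1"
      unfolding M_def using Moebius_function_norm_lt_1[OF c1] hlt by blast
    have cc: "cnj c * c = of_real (norm c ^ 2)"
      by (simp only: complex_norm_square mult.commute)
    have c2: "norm c ^ 2 < 1" using c1 by (simp add: abs_square_less_1)
    have ce: "1 - cnj c * c = of_real (1 - norm c ^ 2)" using cc by simp
    have nz: "1 - cnj c * c \<noteq> 0" unfolding ce using c2 by (simp del: of_real_diff)
    have "(M has_field_derivative deriv h 0 / (1 - cnj c * c)) (at 0)"
    proof -
      have "((\<lambda>z. (h z - c) / (1 - cnj c * h z)) has_field_derivative
          (deriv h 0 * (1 - cnj c * h 0) - (h 0 - c) * (- (cnj c * deriv h 0))) / (1 - cnj c * h 0)^2) (at 0)"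
        using hd[OF D0] nz unfolding c_def
        by (auto intro!: derivative_eq_intros simp: power2_eq_square)
      moreover have "(deriv h 0 * (1 - cnj c * h 0) - (h 0 - c) * (- (cnj c * deriv h 0))) / (1 - cnj c * h 0)^2
          = deriv h 0 / (1 - cnj c * c)"
        using nz by (simp add: c_def power2_eq_square)
      ultimately show ?thesis by (simp add: M')
    qed
    then have "deriv M 0 = deriv h 0 / (1 - cnj c * c)" by (rule DERIV_imp_deriv)
    moreover have "norm (deriv M 0) \<le> 1" using Schwarz_Lemma(2)[OF holM M0 Mb, of 0] by simp
    moreover have "norm (deriv h 0 / (1 - cnj c * c)) = norm (deriv h 0) / (1 - norm c ^ 2)"
      unfolding ce norm_divide norm_of_real using c2 by simp
    ultimately have "norm (deriv h 0) / (1 - norm c ^ 2) \<le> 1" by simp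
    then have "norm (deriv h 0) \<le> 1 - norm c ^ 2"
      using c2 by (simp add: divide_le_eq)
    then show ?thesis using u2 d0 by (simp add: c_def norm_mult)
  qed
qed



lemma comp_deriv_at:
  assumes "(u has_field_derivative U) (at z)" "(p has_field_derivative P) (at (u z))"
  shows "((\<lambda>z. p (u z)) has_field_derivative P * U) (at z)"
  using DERIV_chain2[OF assms(2,1)] .

lemma sub_coeffs:
  fixes h \<phi> :: "complex \<Rightarrow> complex"
  assumes holh: "h holomorphic_on ball 0 1" and h10: "deriv h 0 = 1"
    and holp: "\<phi> holomorphic_on ball 0 1" and p0: "\<phi> 0 = 1"
    and u: "u holomorphic_on ball 0 1" "u 0 = 0" "\<And>z. z \<in> ball 0 1 \<Longrightarrow> norm (u z) < 1"
    and sub: "\<And>z. z \<in> ball 0 1 \<Longrightarrow> 1 + z * deriv (deriv h) z / deriv h z = \<phi> (u z)"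
  shows "deriv \<phi> 0 * deriv u 0 = deriv (deriv h) 0"
    and "deriv (deriv \<phi>) 0 * (deriv u 0)^2 + deriv \<phi> 0 * deriv (deriv u) 0
           = 2 * deriv (deriv (deriv h)) 0 - 2 * (deriv (deriv h) 0)^2"
proof -
  define D where "D = ball (0::complex) 1"
  define h1 where "h1 = deriv h"
  define h2 where "h2 = deriv h1"
  define h3 where "h3 = deriv h2"
  define p1 where "p1 = deriv \<phi>"
  define p2 where "p2 = deriv p1"
  define u1 where "u1 = deriv u"
  define u2 where "u2 = deriv u1"
  have oD: "open D" by (simp add: D_def)
  have hh1: "h1 holomorphic_on D" unfolding h1_def D_def using holh by (auto intro: holomorphic_deriv)
  have hh2: "h2 holomorphic_on D" unfolding h2_def D_def using hh1 oD D_def by (auto intro: holomorphic_deriv)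
  have hp1: "p1 holomorphic_on D" unfolding p1_def D_def using holp by (auto intro: holomorphic_deriv)
  have hu1: "u1 holomorphic_on D" unfolding u1_def D_def using u(1) by (auto intro: holomorphic_deriv)
  have dh1: "\<And>z. z \<in> D \<Longrightarrow> (h1 has_field_derivative h2 z) (at z)"
    unfolding h2_def using hh1 oD holomorphic_derivI by blast
  have dh2: "\<And>z. z \<in> D \<Longrightarrow> (h2 has_field_derivative h3 z) (at z)"
    unfolding h3_def using hh2 oD holomorphic_derivI by blast
  have dp: "\<And>z. z \<in> D \<Longrightarrow> (\<phi> has_field_derivative p1 z) (at z)"
    unfolding p1_def D_def using holp holomorphic_derivI by blast
  have dp1: "\<And>z. z \<in> D \<Longrightarrow> (p1 has_field_derivative p2 z) (at z)"
    unfolding p2_def using hp1 oD holomorphic_derivI by blast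
  have du: "\<And>z. z \<in> D \<Longrightarrow> (u has_field_derivative u1 z) (at z)"
    unfolding u1_def D_def using u(1) holomorphic_derivI by blast
  have du1: "\<And>z. z \<in> D \<Longrightarrow> (u1 has_field_derivative u2 z) (at z)"
    unfolding u2_def using hu1 oD holomorphic_derivI by blast
  have uD: "\<And>z. z \<in> D \<Longrightarrow> u z \<in> D" using u(3) by (auto simp: D_def)
  define S where "S = D \<inter> h1 -` (- {0})"
  have oS: "open S" unfolding S_def
    by (rule continuous_open_preimage[OF holomorphic_on_imp_continuous_on[OF hh1] oD]) auto
  have S0: "0 \<in> S" using h10 by (simp add: S_def D_def h1_def)
  have SD: "\<And>z. z \<in> S \<Longrightarrow> z \<in> D" by (simp add: S_def)
  have eq0: "\<phi> (u z) * h1 z = h1 z + z * h2 z" if "z \<in> S" for z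
  proof -
    have "h1 z \<noteq> 0" using that by (simp add: S_def)
    moreover have "1 + z * h2 z / h1 z = \<phi> (u z)" using sub[of z] that SD[OF that]
      by (simp add: D_def h1_def h2_def)
    ultimately show ?thesis by (auto simp: field_simps)
  qed
  have eq1: "p1 (u z) * u1 z * h1 z + \<phi> (u z) * h2 z = 2 * h2 z + z * h3 z" if z: "z \<in> S" for z
  proof (rule eq_deriv_open[OF oS z eq0])
    have a: "((\<lambda>z. \<phi> (u z)) has_field_derivative p1 (u z) * u1 z) (at z)"
      by (rule comp_deriv_at[OF du dp]) (use SD[OF z] uD in auto)
    show "((\<lambda>z. \<phi> (u z) * h1 z) has_field_derivative p1 (u z) * u1 z * h1 z + \<phi> (u z) * h2 z) (at z)"
      using DERIV_mult[OF a dh1[OF SD[OF z]]] by (simp add: algebra_simps)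
    show "((\<lambda>z. h1 z + z * h2 z) has_field_derivative 2 * h2 z + z * h3 z) (at z)"
      using dh1[OF SD[OF z]] dh2[OF SD[OF z]] by (auto intro!: derivative_eq_intros)
  qed
  have D0: "0 \<in> D" by (simp add: D_def)
  have e1: "p1 0 * u1 0 = h2 0" using eq1[OF S0] u(2) p0 h10 by (simp add: h1_def)
  have e2: "p2 0 * u1 0 * u1 0 * h1 0 + p1 0 * u2 0 * h1 0 + p1 0 * u1 0 * h2 0 + (p1 0 * u1 0 * h2 0 + \<phi> 0 * h3 0)
      = 2 * h3 0 + (h3 0 + 0 * 0)"
  proof (rule eq_deriv_open[OF oS S0 eq1])
    have a: "((\<lambda>z. \<phi> (u z)) has_field_derivative p1 (u 0) * u1 0) (at 0)"
      by (rule comp_deriv_at[OF du dp]) (use D0 uD in auto)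
    have b: "((\<lambda>z. p1 (u z)) has_field_derivative p2 (u 0) * u1 0) (at 0)"
      by (rule comp_deriv_at[OF du dp1]) (use D0 uD in auto)
    show "((\<lambda>z. p1 (u z) * u1 z * h1 z + \<phi> (u z) * h2 z) has_field_derivative
      p2 0 * u1 0 * u1 0 * h1 0 + p1 0 * u2 0 * h1 0 + p1 0 * u1 0 * h2 0 + (p1 0 * u1 0 * h2 0 + \<phi> 0 * h3 0)) (at 0)"
      using DERIV_add[OF DERIV_mult[OF DERIV_mult[OF b du1[OF D0]] dh1[OF D0]] DERIV_mult[OF a dh2[OF D0]]] u(2)
      by (simp add: algebra_simps)
    show "((\<lambda>z. 2 * h2 z + z * h3 z) has_field_derivative 2 * h3 0 + (h3 0 + 0 * 0)) (at 0)"
    proof -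
      have dh3: "(h3 has_field_derivative deriv h3 0) (at 0)"
        unfolding h3_def using holomorphic_derivI[OF holomorphic_deriv[OF hh2 oD] oD D0] .
      show ?thesis
        using DERIV_add[OF DERIV_cmult[OF dh2[OF D0], of 2] DERIV_mult[OF DERIV_ident dh3]] by simp
    qed
  qed
  show "deriv \<phi> 0 * deriv u 0 = deriv (deriv h) 0" using e1 by (simp add: p1_def u1_def h2_def h1_def)
  have "p2 0 * (u1 0)^2 + p1 0 * u2 0 = 2 * h3 0 - 2 * (h2 0)^2"
    using e2 e1 p0 h10 unfolding h1_def[symmetric] by (simp add: power2_eq_square algebra_simps)
  then show "deriv (deriv \<phi>) 0 * (deriv u 0)^2 + deriv \<phi> 0 * deriv (deriv u) 0
           = 2 * deriv (deriv (deriv h)) 0 - 2 * (deriv (deriv h) 0)^2"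
    by (simp add: p1_def p2_def u1_def u2_def h1_def h2_def h3_def)
qed


lemma inv_coeffs:
  fixes f g :: "complex \<Rightarrow> complex"
  assumes holf: "f holomorphic_on ball 0 1" and f0: "f 0 = 0" and f10: "deriv f 0 = 1"
    and holg: "g holomorphic_on ball 0 1"
    and inv: "\<forall>z\<in>ball 0 1. f z \<in> ball 0 1 \<longrightarrow> g (f z) = z"
  shows "deriv g 0 = 1" "deriv (deriv g) 0 = - deriv (deriv f) 0"
    "deriv (deriv (deriv g)) 0 = 3 * (deriv (deriv f) 0)^2 - deriv (deriv (deriv f)) 0"
proof -
  define D where "D = ball (0::complex) 1"
  have oD: "open D" by (simp add: D_def)
  have D0: "0 \<in> D" by (simp add: D_def)
  define f1 where "f1 = deriv f"
  define f2 where "f2 = deriv f1"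
  define f3 where "f3 = deriv f2"
  define g1 where "g1 = deriv g"
  define g2 where "g2 = deriv g1"
  define g3 where "g3 = deriv g2"
  have hf1: "f1 holomorphic_on D" unfolding f1_def D_def using holf by (auto intro: holomorphic_deriv)
  have hf2: "f2 holomorphic_on D" unfolding f2_def using hf1 oD by (auto intro: holomorphic_deriv)
  have hg1: "g1 holomorphic_on D" unfolding g1_def D_def using holg by (auto intro: holomorphic_deriv)
  have hg2: "g2 holomorphic_on D" unfolding g2_def using hg1 oD by (auto intro: holomorphic_deriv)
  have df: "\<And>z. z \<in> D \<Longrightarrow> (f has_field_derivative f1 z) (at z)"
    unfolding f1_def D_def using holf holomorphic_derivI by blast
  have df1: "\<And>z. z \<in> D \<Longrightarrow> (f1 has_field_derivative f2 z) (at z)"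
    unfolding f2_def using hf1 oD holomorphic_derivI by blast
  have df2: "\<And>z. z \<in> D \<Longrightarrow> (f2 has_field_derivative f3 z) (at z)"
    unfolding f3_def using hf2 oD holomorphic_derivI by blast
  have dg: "\<And>z. z \<in> D \<Longrightarrow> (g has_field_derivative g1 z) (at z)"
    unfolding g1_def D_def using holg holomorphic_derivI by blast
  have dg1: "\<And>z. z \<in> D \<Longrightarrow> (g1 has_field_derivative g2 z) (at z)"
    unfolding g2_def using hg1 oD holomorphic_derivI by blast
  have dg2: "\<And>z. z \<in> D \<Longrightarrow> (g2 has_field_derivative g3 z) (at z)"
    unfolding g3_def using hg2 oD holomorphic_derivI by blast
  define S where "S = D \<inter> f -` D"
  have oS: "open S" unfolding S_def
    by (rule continuous_open_preimage[OF holomorphic_on_imp_continuous_on[OF holf[folded D_def]] oD oD])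
  have S0: "0 \<in> S" using f0 D0 by (simp add: S_def)
  have SD: "\<And>z. z \<in> S \<Longrightarrow> z \<in> D" "\<And>z. z \<in> S \<Longrightarrow> f z \<in> D" by (auto simp: S_def)
  have eqA: "g1 (f z) * f1 z = 1" if z: "z \<in> S" for z
  proof (rule eq_deriv_open[OF oS z, of "\<lambda>z. g (f z)" "\<lambda>z. z"])
    show "\<And>x. x \<in> S \<Longrightarrow> g (f x) = x" using inv by (auto simp: S_def D_def)
    show "((\<lambda>z. g (f z)) has_field_derivative g1 (f z) * f1 z) (at z)"
      by (rule comp_deriv_at[OF df dg]) (use SD z in auto)
  qed (rule DERIV_ident)
  have eqB: "g2 (f z) * f1 z * f1 z + g1 (f z) * f2 z = 0" if z: "z \<in> S" for z
  proof (rule eq_deriv_open[OF oS z, of "\<lambda>z. g1 (f z) * f1 z" "\<lambda>z. 1"])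
    show "\<And>x. x \<in> S \<Longrightarrow> g1 (f x) * f1 x = 1" using eqA by blast
    have a: "((\<lambda>z. g1 (f z)) has_field_derivative g2 (f z) * f1 z) (at z)"
      by (rule comp_deriv_at[OF df dg1]) (use SD z in auto)
    show "((\<lambda>z. g1 (f z) * f1 z) has_field_derivative g2 (f z) * f1 z * f1 z + g1 (f z) * f2 z) (at z)"
      using DERIV_mult[OF a df1[OF SD(1)[OF z]]] by (simp add: algebra_simps)
  qed (rule DERIV_const)
  have eqC: "g3 (f 0) * f1 0 * f1 0 * f1 0 + g2 (f 0) * f2 0 * f1 0 + g2 (f 0) * f1 0 * f2 0
      + (g2 (f 0) * f1 0 * f2 0 + g1 (f 0) * f3 0) = 0"
  proof (rule eq_deriv_open[OF oS S0, of "\<lambda>z. g2 (f z) * f1 z * f1 z + g1 (f z) * f2 z" "\<lambda>z. 0"])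
    show "\<And>x. x \<in> S \<Longrightarrow> g2 (f x) * f1 x * f1 x + g1 (f x) * f2 x = 0" using eqB by blast
    have a: "((\<lambda>z. g1 (f z)) has_field_derivative g2 (f 0) * f1 0) (at 0)"
      by (rule comp_deriv_at[OF df dg1]) (use SD S0 in auto)
    have b: "((\<lambda>z. g2 (f z)) has_field_derivative g3 (f 0) * f1 0) (at 0)"
      by (rule comp_deriv_at[OF df dg2]) (use SD S0 in auto)
    show "((\<lambda>z. g2 (f z) * f1 z * f1 z + g1 (f z) * f2 z) has_field_derivative
       g3 (f 0) * f1 0 * f1 0 * f1 0 + g2 (f 0) * f2 0 * f1 0 + g2 (f 0) * f1 0 * f2 0
      + (g2 (f 0) * f1 0 * f2 0 + g1 (f 0) * f3 0)) (at 0)"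
      using DERIV_add[OF DERIV_mult[OF DERIV_mult[OF b df1[OF D0]] df1[OF D0]] DERIV_mult[OF a df2[OF D0]]]
      by (simp add: algebra_simps)
  qed (rule DERIV_const)
  have ff: "f 0 = 0" "f1 0 = 1" using f0 f10 by (auto simp: f1_def)
  have r1: "g1 0 = 1" using eqA[OF S0] ff by simp
  have r2: "g2 0 = - f2 0" using eqB[OF S0] ff r1 by (simp add: add_eq_0_iff)
  have r3: "g3 0 = 3 * (f2 0)^2 - f3 0" using eqC ff r1 r2
    by (simp add: power2_eq_square algebra_simps)
  show "deriv g 0 = 1" "deriv (deriv g) 0 = - deriv (deriv f) 0"
    "deriv (deriv (deriv g)) 0 = 3 * (deriv (deriv f) 0)^2 - deriv (deriv (deriv f)) 0"
    using r1 r2 r3 by (simp_all add: g1_def g2_def g3_def f1_def f2_def f3_def)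
qed


lemma tc_simps: "taylor_coeff f 1 = deriv f 0" "taylor_coeff f (Suc 0) = deriv f 0" "taylor_coeff f 2 = deriv (deriv f) 0 / 2"
  "taylor_coeff f 3 = deriv (deriv (deriv f)) 0 / 6"
  by (simp_all add: taylor_coeff_def eval_nat_numeral fact_numeral)

lemma real_part:
  fixes B1 B2 x :: real
  assumes B1: "B1 > 0"
    and k1: "x * \<bar>2 * B1\<^sup>2 - 4 * B2\<bar> \<le> B1^3 * (4 - 4 * x / B1^2)"
    and x0: "x \<ge> 0"
    and a3: "y \<le> x / 4 + B1 / 6 - x / (6 * B1)"
  shows "sqrt x / 2 \<le> B1 * sqrt B1 / sqrt (4 * B1 + \<bar>2 * B1\<^sup>2 - 4 * B2\<bar>) \<and>
         y \<le> (if B1 \<ge> 2/3 then (1 - 2 / (3 * B1)) * B1 ^ 3 / (4 * B1 + \<bar>2 * B1\<^sup>2 - 4 * B2\<bar>) + B1 / 6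
            else B1 / 6)"
proof -
  define K where "K = 4 * B1 + \<bar>2 * B1\<^sup>2 - 4 * B2\<bar>"
  have K0: "K > 0" using B1 by (simp add: K_def add_pos_nonneg)
  have "B1^3 * (4 - 4 * x / B1^2) = 4 * B1^3 - 4 * B1 * x" using B1
    by (simp add: field_simps power2_eq_square power3_eq_cube)
  then have "x * K \<le> 4 * B1^3" using k1 by (simp add: K_def algebra_simps)
  then have xb: "x / 4 \<le> B1^3 / K" using K0 by (simp add: field_simps)
  have "sqrt x / 2 = sqrt (x / 4)" by (simp add: real_sqrt_divide)
  also have "\<dots> \<le> sqrt (B1^3 / K)" using xb by simp
  also have "\<dots> = B1 * sqrt B1 / sqrt K" using B1
    by (simp add: real_sqrt_divide real_sqrt_mult power3_eq_cube)
  finally have p1: "sqrt x / 2 \<le> B1 * sqrt B1 / sqrt K" .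
  have yx: "y \<le> B1 / 6 + (x / 4) * (1 - 2 / (3 * B1))" using a3 B1 by (simp add: field_simps)
  have p2: "y \<le> (if B1 \<ge> 2/3 then (1 - 2 / (3 * B1)) * B1 ^ 3 / K + B1 / 6 else B1 / 6)"
  proof (cases "B1 \<ge> 2/3")
    case True
    then have "1 - 2 / (3 * B1) \<ge> 0" using B1 by (simp add: field_simps)
    then have "(x / 4) * (1 - 2 / (3 * B1)) \<le> (B1^3 / K) * (1 - 2 / (3 * B1))"
      using xb by (intro mult_right_mono) (use \<open>1 - 2 / (3 * B1) \<ge> 0\<close> in auto)
    moreover have "(B1^3 / K) * (1 - 2 / (3 * B1)) = (1 - 2 / (3 * B1)) * B1 ^ 3 / K" by simp
    ultimately show ?thesis using True yx by (simp only: if_True)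
  next
    case False
    then have "1 - 2 / (3 * B1) \<le> 0" using B1 by (simp add: field_simps)
    then have "(x / 4) * (1 - 2 / (3 * B1)) \<le> 0" using x0 by (simp add: mult_nonneg_nonpos)
    then show ?thesis using False yx by (simp only: if_False)
  qed
  show ?thesis using p1 p2 by (simp only: K_def)
qed


theorem corollary2p2:
  fixes \<phi> f :: "complex \<Rightarrow> complex" and B1 B2 :: real
  assumes "admissible_phi \<phi>"
    and "B1 = Re (taylor_coeff \<phi> 1)" and "B2 = Re (taylor_coeff \<phi> 2)"
    and "f \<in> K_sigma \<phi>"
  shows "norm (taylor_coeff f 2) \<le> B1 * sqrt B1 / sqrt (4 * B1 + \<bar>2 * B1\<^sup>2 - 4 * B2\<bar>) \<and>
         norm (taylor_coeff f 3) \<le>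
           (if B1 \<ge> 2/3 then (1 - 2 / (3 * B1)) * B1 ^ 3 / (4 * B1 + \<bar>2 * B1\<^sup>2 - 4 * B2\<bar>) + B1 / 6
            else B1 / 6)"
proof -
  note adm = assms(1)[unfolded admissible_phi_def unit_disc_def]
  have holp: "\<phi> holomorphic_on ball 0 1" and p0: "\<phi> 0 = 1" using adm by auto
  have B1pos: "B1 > 0" using adm assms(2) by (simp add: tc_simps)
  have "taylor_coeff \<phi> 1 \<in> \<real>" "taylor_coeff \<phi> 2 \<in> \<real>" using adm by auto
  then have P1: "deriv \<phi> 0 = of_real B1" and P2: "deriv (deriv \<phi>) 0 = of_real (2 * B2)"
    using assms(2,3) by (auto simp: tc_simps elim!: Reals_cases)
  obtain g where bi: "bi_univalent f g"
    and sf: "subordinate (\<lambda>z. 1 + z * deriv (deriv f) z / deriv f z) \<phi>"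
    and sg: "subordinate (\<lambda>w. 1 + w * deriv (deriv g) w / deriv g w) \<phi>"
    using assms(4) by (auto simp: K_sigma_def)
  note bi' = bi[unfolded bi_univalent_def unit_disc_def]
  have holf: "f holomorphic_on ball 0 1" and f0: "f 0 = 0" and f10: "deriv f 0 = 1"
    and holg: "g holomorphic_on ball 0 1"
    and inv: "\<forall>z\<in>ball 0 1. f z \<in> ball 0 1 \<longrightarrow> g (f z) = z" using bi' by auto
  note gi = inv_coeffs[OF holf f0 f10 holg inv]
  obtain u where u: "u holomorphic_on ball 0 1" "u 0 = 0" "\<And>z. z \<in> ball 0 1 \<Longrightarrow> norm (u z) < 1"
    and su: "\<And>z. z \<in> ball 0 1 \<Longrightarrow> 1 + z * deriv (deriv f) z / deriv f z = \<phi> (u z)"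
    using sf unfolding subordinate_def unit_disc_def by blast
  obtain v where v: "v holomorphic_on ball 0 1" "v 0 = 0" "\<And>z. z \<in> ball 0 1 \<Longrightarrow> norm (v z) < 1"
    and sv: "\<And>z. z \<in> ball 0 1 \<Longrightarrow> 1 + z * deriv (deriv g) z / deriv g z = \<phi> (v z)"
    using sg unfolding subordinate_def unit_disc_def by blast
  note fu = sub_coeffs[OF holf f10 holp p0 u su]
  note gv = sub_coeffs[OF holg gi(1) holp p0 v sv]
  define A2 where "A2 = deriv (deriv f) 0"
  define A3 where "A3 = deriv (deriv (deriv f)) 0"
  define c1 where "c1 = deriv u 0"
  define C2 where "C2 = deriv (deriv u) 0"
  define d1 where "d1 = deriv v 0"
  define D2 where "D2 = deriv (deriv v) 0"
  have e1: "of_real B1 * c1 = A2" using fu(1) P1 by (simp add: A2_def c1_def)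
  have e2: "of_real (2 * B2) * c1^2 + of_real B1 * C2 = 2 * A3 - 2 * A2^2"
    using fu(2) P1 P2 by (simp add: A2_def A3_def c1_def C2_def)
  have e3: "of_real B1 * d1 = - A2" using gv(1) P1 gi by (simp add: A2_def d1_def)
  have e4: "of_real (2 * B2) * d1^2 + of_real B1 * D2 = 2 * (3 * A2^2 - A3) - 2 * A2^2"
    using gv(2) P1 P2 gi by (simp add: A2_def A3_def d1_def D2_def)
  have B1nz: "(of_real B1 :: complex) \<noteq> 0" using B1pos by simp
  have c1e: "c1 = A2 / of_real B1" using e1 B1nz by (simp add: field_simps)
  have d1e: "d1 = - A2 / of_real B1" using e3 B1nz by (simp add: field_simps)
  have key1: "A2^2 * of_real (2 * B1\<^sup>2 - 4 * B2) = of_real B1 ^ 3 * (C2 + D2)"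
  proof -
    have e2': "2 * of_real B2 * c1^2 + of_real B1 * C2 = 2 * A3 - 2 * A2^2" using e2 by simp
    have e4': "2 * of_real B2 * d1^2 + of_real B1 * D2 = 2 * (3 * A2^2 - A3) - 2 * A2^2" using e4 by simp
    have S: "of_real B1 * (C2 + D2) = 2 * A2^2 - 2 * of_real B2 * (c1^2 + d1^2)"
      using e2' e4' by algebra
    have q1: "of_real B1 ^ 2 * c1^2 = A2^2" using e1 by (metis power_mult_distrib)
    have q2: "of_real B1 ^ 2 * d1^2 = A2^2" using e3 by (metis power_mult_distrib power2_minus)
    have "of_real B1 ^ 3 * (C2 + D2) = of_real B1 ^ 2 * (of_real B1 * (C2 + D2))"
      by (simp add: power2_eq_square power3_eq_cube)
    also have "\<dots> = 2 * A2^2 * of_real B1 ^ 2 - 2 * of_real B2 * (of_real B1 ^ 2 * c1^2 + of_real B1 ^ 2 * d1^2)"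
      unfolding S by (simp add: algebra_simps)
    also have "\<dots> = A2^2 * (2 * of_real B1 ^ 2 - 4 * of_real B2)"
      unfolding q1 q2 by (simp add: algebra_simps)
    finally have "A2^2 * (2 * of_real B1 ^ 2 - 4 * of_real B2) = of_real B1 ^ 3 * (C2 + D2)" by simp
    then show ?thesis by simp
  qed
  have key2: "4 * A3 = 6 * A2^2 + of_real B1 * (C2 - D2)"
  proof -
    have cd: "c1^2 = d1^2" by (simp add: c1e d1e power2_eq_square)
    have e2': "2 * of_real B2 * c1^2 + of_real B1 * C2 = 2 * A3 - 2 * A2^2" using e2 by simp
    have e4': "2 * of_real B2 * d1^2 + of_real B1 * D2 = 2 * (3 * A2^2 - A3) - 2 * A2^2" using e4 by simp
    show ?thesis using cd e2' e4' by algebra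
  qed
  have sc: "norm C2 / 2 \<le> 1 - norm c1 ^ 2"
    using schwarz_coeff[OF u(1,2)] u(3) by (simp add: c1_def C2_def)
  have sd: "norm D2 / 2 \<le> 1 - norm d1 ^ 2"
    using schwarz_coeff[OF v(1,2)] v(3) by (simp add: d1_def D2_def)
  define x where "x = norm A2 ^ 2"
  have nc: "norm c1 ^ 2 = x / B1^2" "norm d1 ^ 2 = x / B1^2" using B1pos
    by (simp_all add: c1e d1e x_def norm_divide power_divide)
  have CD: "norm (C2 + D2) \<le> 4 - 4 * x / B1^2" "norm (C2 - D2) \<le> 4 - 4 * x / B1^2"
    using norm_triangle_ineq[of C2 D2] norm_triangle_ineq4[of C2 D2] sc sd nc by auto
  have k1: "x * \<bar>2 * B1\<^sup>2 - 4 * B2\<bar> \<le> B1^3 * (4 - 4 * x / B1^2)"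
  proof -
    have "x * \<bar>2 * B1\<^sup>2 - 4 * B2\<bar> = norm (A2^2 * of_real (2 * B1\<^sup>2 - 4 * B2))"
      by (simp only: x_def norm_mult norm_power norm_of_real)
    also have "\<dots> = B1^3 * norm (C2 + D2)" using B1pos
      by (simp only: key1 norm_mult norm_power norm_of_real)
    also have "\<dots> \<le> B1^3 * (4 - 4 * x / B1^2)" using CD(1) B1pos by (intro mult_left_mono) auto
    finally show ?thesis .
  qed
  have a3: "norm A3 / 6 \<le> x / 4 + B1 / 6 - x / (6 * B1)"
  proof -
    have "4 * norm A3 = norm (6 * A2^2 + of_real B1 * (C2 - D2))"
      using arg_cong[OF key2, of norm] by (simp add: norm_mult)
    also have "\<dots> \<le> 6 * x + B1 * norm (C2 - D2)"
      using norm_triangle_ineq[of "6 * A2^2" "of_real B1 * (C2 - D2)"] B1pos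
      by (simp add: norm_mult norm_power x_def)
    also have "\<dots> \<le> 6 * x + B1 * (4 - 4 * x / B1^2)"
      using CD(2) B1pos by (simp add: mult_left_mono)
    finally have "4 * norm A3 \<le> 6 * x + B1 * (4 - 4 * x / B1^2)" .
    moreover have "B1 * (4 - 4 * x / B1^2) = 4 * B1 - 4 * x / B1" using B1pos
      by (simp add: field_simps power2_eq_square)
    ultimately have "4 * norm A3 \<le> 6 * x + 4 * B1 - 4 * (x / B1)" by simp
    moreover have "x / (6 * B1) = (x / B1) / 6" by simp
    ultimately show ?thesis by linarith
  qed
  have t2: "norm (taylor_coeff f 2) = sqrt x / 2" by (simp add: tc_simps x_def A2_def norm_divide)
  have t3: "norm (taylor_coeff f 3) = norm A3 / 6" by (simp add: tc_simps A3_def norm_divide)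
  have x0: "x \<ge> 0" by (simp add: x_def)
  show ?thesis unfolding t2 t3 using real_part[OF B1pos k1 x0 a3] .
qed

end
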